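(* Let $S=\frac1n\sum_{i=1}^n\mathbf x_i\mathbf x_i^\top$ and let $k,k'\ge0$ be integers. Let $\Lambda=\sum_{j=1}^d\lambda_j^\Lambda\mathbf u_j\mathbf u_j^\top$ and $\Gamma=\sum_{j=1}^d\lambda_j^\Gamma\mathbf u_j\mathbf u_j^\top$. Then there are scalars $\beta_1,\dots,\beta_5$ such that $$\mathbb E\big[S\Lambda S^k\Gamma S^{k'}\big]=\beta_1\Lambda\Gamma+\beta_2\operatorname{tr}(\Lambda)\Gamma+\beta_3\operatorname{tr}(\Gamma)\Lambda+\beta_4\operatorname{tr}(\Lambda)\operatorname{tr}(\Gamma)I+\beta_5\operatorname{tr}(\Lambda\Gamma)I.$$
   Context: $\mathbf x_1,\dots,\mathbf x_n$ are i.i.d. $\mathcal N(0,I_d)$. $\{\mathbf u_j\}_{j=1}^d$ is an orthonormal basis of $\mathbb R^d$, and $\lambda_j^\Lambda,\lambda_j^\Gamma$ are real numbers. *)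

theory Defs
  imports "HOL-Analysis.Analysis" "HOL-Probability.Probability"
begin

definition outer :: "real^'d \<Rightarrow> real^'d^'d" where
  "outer u = (\<chi> i j. u $ i * u $ j)"

primrec mat_pow :: "real^'d^'d \<Rightarrow> nat \<Rightarrow> real^'d^'d" where
  "mat_pow A 0 = mat 1"
| "mat_pow A (Suc k) = A ** mat_pow A k"

definition orthonormal_basis :: "('d::finite \<Rightarrow> real^'d) \<Rightarrow> bool" where
  "orthonormal_basis u \<longleftrightarrow> (\<forall>i j. u i \<bullet> u j = (if i = j then 1 else 0))"

text \<open>Sample space for x_1,...,x_n i.i.d. N(0, I_d): all n*d coordinates
  (i,j) with i < n are i.i.d. standard normal.\<close>
definition gauss_sample :: "nat \<Rightarrow> ((nat \<times> 'd::finite) \<Rightarrow> real) measure" where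
  "gauss_sample n = PiM ({..<n} \<times> UNIV) (\<lambda>_. std_normal_distribution)"

text \<open>The i-th sample vector x_{i+1} (0-based index i < n).\<close>
definition sample_vec :: "((nat \<times> 'd::finite) \<Rightarrow> real) \<Rightarrow> nat \<Rightarrow> real^'d" where
  "sample_vec \<omega> i = (\<chi> j. \<omega> (i, j))"

definition sample_cov :: "nat \<Rightarrow> ((nat \<times> 'd::finite) \<Rightarrow> real) \<Rightarrow> real^'d^'d" where
  "sample_cov n \<omega> = (1 / real n) *\<^sub>R (\<Sum>i<n. outer (sample_vec \<omega> i))"

end

theory Submission
  imports Defs
begin


abbreviation "NN \<equiv> std_normal_distribution"

lemma prob_NN: "prob_space NN"
  using real_dist_normal_dist real_distribution_def by blast

lemma prob_PiNN: "prob_space (PiM I (\<lambda>_. NN))"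
  by (rule prob_space_PiM) (rule prob_NN)

lemma indep_coords:
  assumes "I \<noteq> {}"
  shows "prob_space.indep_vars (PiM I (\<lambda>_. NN)) (\<lambda>_. NN) (\<lambda>i \<omega>. \<omega> i) I"
proof -
  interpret prob_space "PiM I (\<lambda>_. NN)" by (rule prob_PiNN)
  have "distr (PiM I (\<lambda>_. NN)) (PiM I (\<lambda>_. NN)) (\<lambda>x. \<lambda>i\<in>I. x i) = distr (PiM I (\<lambda>_. NN)) (PiM I (\<lambda>_. NN)) (\<lambda>x. x)"
    by (rule distr_cong) (auto simp: space_PiM PiE_def extensional_def restrict_def fun_eq_iff)
  also have "\<dots> = PiM I (\<lambda>_. NN)" by (rule distr_id)
  also have "\<dots> = PiM I (\<lambda>i. distr (PiM I (\<lambda>_. NN)) NN (\<lambda>\<omega>. \<omega> i))"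
    by (rule PiM_cong) (auto intro!: distr_PiM_component[symmetric] prob_NN)
  moreover have rv: "random_variable NN (\<lambda>\<omega>. \<omega> i)" for i
  proof (cases "i \<in> I")
    case True then show ?thesis by (auto intro!: measurable_component_singleton)
  next
    case False
    have "(\<lambda>\<omega>. \<omega> i) \<in> measurable (PiM I (\<lambda>_. NN)) NN \<longleftrightarrow> (\<lambda>\<omega>. undefined) \<in> measurable (PiM I (\<lambda>_. NN)) NN"
      by (rule measurable_cong) (use False in \<open>auto simp: space_PiM PiE_def extensional_def\<close>)
    then show ?thesis by (simp add: space_PiM)
  qed
  ultimately show ?thesis
    by (subst indep_vars_iff_distr_eq_PiM[OF assms rv]) auto
qed

lemma distributed_coord:
  assumes "i \<in> I"
  shows "distributed (PiM I (\<lambda>_. NN)) lborel (\<lambda>\<omega>. \<omega> i) std_normal_density"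
proof -
  have "distr (PiM I (\<lambda>_. NN)) lborel (\<lambda>\<omega>. \<omega> i) = distr (PiM I (\<lambda>_. NN)) NN (\<lambda>\<omega>. \<omega> i)"
    by (rule distr_cong) auto
  also have "\<dots> = NN" using assms by (intro distr_PiM_component prob_NN)
  finally show ?thesis unfolding distributed_def using assms
    by (auto intro!: measurable_component_singleton)
qed

definition nmom :: "nat \<Rightarrow> real \<Rightarrow> real" where
  "nmom m s = (if even m then fact m / ((2/s)^(m div 2) * fact (m div 2)) else 0)"

lemma normal_mom:
  assumes "0 < \<sigma>" shows "has_bochner_integral lborel (\<lambda>x. normal_density 0 \<sigma> x * x ^ m) (nmom m (\<sigma>\<^sup>2))"
proof (cases "even m")
  case True
  then obtain k where m: "m = 2*k" by auto
  show ?thesis using normal_moment_even[where \<mu>=0 and \<sigma>=\<sigma> and k=k] assms by (simp add: nmom_def m)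
next
  case False
  then obtain k where m: "m = 2*k+1" using oddE by blast
  show ?thesis using normal_moment_odd[where \<mu>=0 and \<sigma>=\<sigma> and k=k] assms by (simp add: nmom_def m)
qed

lemma lin_moment:
  assumes "finite I"
  shows "integrable (PiM I (\<lambda>_. NN)) (\<lambda>\<omega>. (\<Sum>p\<in>I. c p * \<omega> p)^m) \<and>
    (\<integral>\<omega>. (\<Sum>p\<in>I. c p * \<omega> p)^m \<partial>PiM I (\<lambda>_. NN)) = nmom m (\<Sum>p\<in>I. (c p)\<^sup>2)"
proof -
  interpret P: prob_space "PiM I (\<lambda>_. NN)" by (rule prob_PiNN)
  define J where "J = {p\<in>I. c p \<noteq> 0}"
  have JI: "J \<subseteq> I" "finite J" using assms by (auto simp: J_def)
  have sumJ: "(\<Sum>p\<in>I. c p * \<omega> p) = (\<Sum>p\<in>J. c p * \<omega> p)" for \<omega>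
    using assms by (intro sum.mono_neutral_right) (auto simp: J_def)
  have sumJ2: "(\<Sum>p\<in>I. (c p)\<^sup>2) = (\<Sum>p\<in>J. (c p)\<^sup>2)"
    using assms by (intro sum.mono_neutral_right) (auto simp: J_def)
  show ?thesis
  proof (cases "J = {}")
    case True
    have "nmom m 0 = 0^m" by (cases m) (auto simp: nmom_def)
    then show ?thesis using True by (simp add: sumJ sumJ2 P.prob_space)
  next
    case False
    then have "I \<noteq> {}" using JI by auto
    define \<sigma> where "\<sigma> = sqrt (\<Sum>p\<in>J. (c p)\<^sup>2)"
    have pos: "0 < \<bar>c p\<bar>" if "p \<in> J" for p using that by (auto simp: J_def)
    have ind: "P.indep_vars (\<lambda>_. borel) (\<lambda>p \<omega>. c p * \<omega> p) J"
      using P.indep_vars_compose2[OF indep_coords[OF \<open>I \<noteq> {}\<close>], of "\<lambda>p x. c p * x" "\<lambda>_. borel"]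
      by (rule P.indep_vars_subset) (auto simp: JI)
    have dist: "distributed (PiM I (\<lambda>_. NN)) lborel (\<lambda>\<omega>. c p * \<omega> p) (normal_density 0 \<bar>c p\<bar>)"
      if "p \<in> J" for p
      using P.normal_density_affine[OF distributed_coord[of p I], where \<alpha>="c p" and \<beta>=0] that JI
      by (auto simp: J_def)
    have D: "distributed (PiM I (\<lambda>_. NN)) lborel (\<lambda>\<omega>. \<Sum>p\<in>J. c p * \<omega> p) (normal_density 0 \<sigma>)"
      using P.sum_indep_normal[OF JI(2) False ind pos dist]
      by (simp add: \<sigma>_def)
    have spos: "0 < \<sigma>" unfolding \<sigma>_def using False JI pos
      by (intro real_sqrt_gt_zero sum_pos) auto
    have s2: "\<sigma>\<^sup>2 = (\<Sum>p\<in>J. (c p)\<^sup>2)" unfolding \<sigma>_def by (simp add: sum_nonneg)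
    have "integrable (PiM I (\<lambda>_. NN)) (\<lambda>\<omega>. (\<Sum>p\<in>J. c p * \<omega> p)^m)"
      using distributed_integrable[OF D, of "\<lambda>x. x^m"] normal_mom[OF spos, of m] by (auto simp: has_bochner_integral_iff)
    moreover have "(\<integral>\<omega>. (\<Sum>p\<in>J. c p * \<omega> p)^m \<partial>PiM I (\<lambda>_. NN)) = nmom m (\<sigma>\<^sup>2)"
      using distributed_integral[OF D, of "\<lambda>x. x^m"] normal_mom[OF spos, of m]
      by (auto dest: has_bochner_integral_integral_eq)
    ultimately show ?thesis by (simp add: sumJ sumJ2 s2)
  qed
qed



primrec Dl :: "real list \<Rightarrow> (real \<Rightarrow> real) \<Rightarrow> real \<Rightarrow> real" where
  "Dl [] f s = f s"
| "Dl (z#zs) f s = Dl zs f (s + z) - Dl zs f s"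

lemma Dl_lin: "Dl zs (\<lambda>t. a * f t + b * g t) s = a * Dl zs f s + b * Dl zs g s"
  by (induction zs arbitrary: s) (auto simp: algebra_simps)

lemma Dl_diff: "Dl zs (\<lambda>t. f t - g t) s = Dl zs f s - Dl zs g s"
  using Dl_lin[of zs 1 f "-1" g s] by simp

lemma Dl_sum: "finite K \<Longrightarrow> Dl zs (\<lambda>t. \<Sum>k\<in>K. g k t) s = (\<Sum>k\<in>K. Dl zs (g k) s)"
proof (induction K rule: finite_induct)
  case empty
  then show ?case using Dl_lin[of zs 0 "\<lambda>_. 0" 0 "\<lambda>_. 0" s] by simp
next
  case (insert x F)
  then show ?case using Dl_lin[of zs 1 "g x" 1 "\<lambda>t. \<Sum>k\<in>F. g k t" s] by simp
qed

lemma Dl_cmult: "Dl zs (\<lambda>t. a * f t) s = a * Dl zs f s"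
  using Dl_lin[of zs a f 0 f s] by simp

lemma Dl_shift: "Dl zs (\<lambda>t. f (t + z)) s = Dl zs f (s + z)"
  by (induction zs arbitrary: s) (auto simp: algebra_simps)

lemma Dl_Cons': "Dl (z#zs) f s = Dl zs (\<lambda>t. f (t + z) - f t) s"
  using Dl_diff[of zs "\<lambda>t. f (t+z)" f s] Dl_shift[of zs f z s] by simp

lemma Dl_pow: "q \<le> length zs \<Longrightarrow> Dl zs (\<lambda>t. t^q) s = (if q = length zs then fact q * prod_list zs else 0)"
proof (induction zs arbitrary: q s)
  case Nil then show ?case by simp
next
  case (Cons z zs)
  have bin: "(t + z)^q - t^q = (\<Sum>k\<in>{..<q}. (of_nat (q choose k) * z^(q-k)) * t^k)" for t
  proof -
    have "(t + z)^q = (\<Sum>k\<le>q. of_nat (q choose k) * t^k * z^(q-k))" by (rule binomial_ring)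
    also have "\<dots> = (\<Sum>k\<in>{..<q}. of_nat (q choose k) * t^k * z^(q-k)) + t^q"
      by (simp add: lessThan_Suc_atMost[symmetric])
    finally show ?thesis by (simp add: algebra_simps)
  qed
  have "Dl (z#zs) (\<lambda>t. t^q) s = Dl zs (\<lambda>t. \<Sum>k\<in>{..<q}. (of_nat (q choose k) * z^(q-k)) * t^k) s"
    by (subst Dl_Cons') (simp only: bin)
  also have "\<dots> = (\<Sum>k\<in>{..<q}. (of_nat (q choose k) * z^(q-k)) * Dl zs (\<lambda>t. t^k) s)"
    by (simp add: Dl_sum Dl_cmult)
  also have "\<dots> = (if q = length (z#zs) then fact q * prod_list (z#zs) else 0)"
  proof (cases "q = length (z#zs)")
    case True
    have "(\<Sum>k\<in>{..<q}. (of_nat (q choose k) * z^(q-k)) * Dl zs (\<lambda>t. t^k) s)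
        = (\<Sum>k\<in>{length zs}. (of_nat (q choose k) * z^(q-k)) * Dl zs (\<lambda>t. t^k) s)"
      using True by (intro sum.mono_neutral_right) (auto simp: Cons.IH)
    also have "\<dots> = of_nat q * z * (fact (length zs) * prod_list zs)"
      using True by (simp add: Cons.IH)
    also have "\<dots> = fact q * prod_list (z#zs)" using True by (simp add: algebra_simps)
    finally show ?thesis using True by simp
  next
    case False
    then have "q \<le> length zs" using Cons.prems by simp
    then show ?thesis using False by (auto simp: Cons.IH intro!: sum.neutral)
  qed
  finally show ?case .
qed

definition lin :: "'i set \<Rightarrow> ('i \<Rightarrow> real) \<Rightarrow> ('i \<Rightarrow> real) \<Rightarrow> real" where
  "lin I c \<omega> = (\<Sum>p\<in>I. c p * \<omega> p)"

definition plin :: "'i set \<Rightarrow> ('i \<Rightarrow> real) list \<Rightarrow> ('i \<Rightarrow> real) \<Rightarrow> real" where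
  "plin I cs \<omega> = prod_list (map (\<lambda>c. lin I c \<omega>) cs)"

primrec pol :: "'i set \<Rightarrow> ('i \<Rightarrow> real) list \<Rightarrow> ('i \<Rightarrow> real) \<Rightarrow> nat \<Rightarrow> ('i \<Rightarrow> real) \<Rightarrow> real" where
  "pol I [] t q \<omega> = (lin I t \<omega>)^q"
| "pol I (c#cs) t q \<omega> = pol I cs (\<lambda>p. t p + c p) q \<omega> - pol I cs t q \<omega>"

lemma lin_add: "lin I (\<lambda>p. a p + b p) \<omega> = lin I a \<omega> + lin I b \<omega>"
  by (simp add: lin_def sum.distrib algebra_simps)

lemma lin_zero: "lin I (\<lambda>_. 0) \<omega> = 0"
  by (simp add: lin_def)

lemma pol_Dl: "pol I cs t q \<omega> = Dl (map (\<lambda>c. lin I c \<omega>) cs) (\<lambda>x. x^q) (lin I t \<omega>)"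
  by (induction cs arbitrary: t) (auto simp: lin_add)

lemma plin_pol: "plin I cs \<omega> = pol I cs (\<lambda>_. 0) (length cs) \<omega> / fact (length cs)"
  by (simp add: pol_Dl Dl_pow lin_zero plin_def)

lemma pol_integrable:
  assumes "finite I"
  shows "integrable (PiM I (\<lambda>_. NN)) (pol I cs t q)"
proof (induction cs arbitrary: t)
  case Nil
  show ?case using lin_moment[OF assms(1), of t q] by (simp add: lin_def)
next
  case (Cons c cs)
  show ?case using Cons.IH by simp
qed

lemma pol_int:
  assumes "finite I"
  assumes Tadd: "\<And>a b. T (\<lambda>p. a p + b p) = (\<lambda>p. T a p + T b p)"
  assumes Tnorm: "\<And>a. (\<Sum>p\<in>I. (T a p)\<^sup>2) = (\<Sum>p\<in>I. (a p)\<^sup>2)"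
  shows "(\<integral>\<omega>. pol I (map T cs) (T t) q \<omega> \<partial>PiM I (\<lambda>_. NN)) = (\<integral>\<omega>. pol I cs t q \<omega> \<partial>PiM I (\<lambda>_. NN))"
proof (induction cs arbitrary: t)
  case Nil
  show ?case using lin_moment[OF assms(1), of t q] lin_moment[OF assms(1), of "T t" q]
    by (simp add: lin_def Tnorm)
next
  case (Cons c cs)
  show ?case
    using Cons.IH[of t] Cons.IH[of "\<lambda>p. t p + c p"]
    by (simp add: Tadd pol_integrable[OF assms(1)])
qed



definition polyf :: "'i set \<Rightarrow> (('i \<Rightarrow> real) \<Rightarrow> real) \<Rightarrow> bool" where
  "polyf I f \<longleftrightarrow> (\<exists>xs. \<forall>\<omega>. f \<omega> = (\<Sum>x\<leftarrow>xs. fst x * plin I (snd x) \<omega>))"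

lemma polyf_const: "polyf I (\<lambda>\<omega>. a)"
  unfolding polyf_def by (rule exI[of _ "[(a, [])]"]) (simp add: plin_def)

lemma polyf_coord: assumes "finite I" "p \<in> I" shows "polyf I (\<lambda>\<omega>. \<omega> p)"
proof -
  have "(\<Sum>q\<in>I. (if q = p then 1 else 0) * \<omega> q) = (\<Sum>q\<in>I. if q = p then \<omega> q else 0)" for \<omega> :: "_ \<Rightarrow> real"
    by (rule sum.cong) auto
  also have "\<dots> \<omega> = \<omega> p" for \<omega> using assms by (simp add: sum.delta')
  finally show ?thesis unfolding polyf_def
    by (intro exI[of _ "[(1, [\<lambda>q. if q = p then 1 else 0])]"]) (simp add: plin_def lin_def)
qed

lemma polyf_add: "polyf I f \<Longrightarrow> polyf I g \<Longrightarrow> polyf I (\<lambda>\<omega>. f \<omega> + g \<omega>)"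
  unfolding polyf_def
proof (elim exE)
  fix xs ys assume f: "\<forall>\<omega>. f \<omega> = (\<Sum>x\<leftarrow>xs. fst x * plin I (snd x) \<omega>)"
    and g: "\<forall>\<omega>. g \<omega> = (\<Sum>x\<leftarrow>ys. fst x * plin I (snd x) \<omega>)"
  show "\<exists>zs. \<forall>\<omega>. f \<omega> + g \<omega> = (\<Sum>x\<leftarrow>zs. fst x * plin I (snd x) \<omega>)"
    by (rule exI[of _ "xs @ ys"]) (simp add: f g)
qed

lemma plin_append: "plin I (a @ b) \<omega> = plin I a \<omega> * plin I b \<omega>"
  by (simp add: plin_def)

lemma polyf_mult: "polyf I f \<Longrightarrow> polyf I g \<Longrightarrow> polyf I (\<lambda>\<omega>. f \<omega> * g \<omega>)"
  unfolding polyf_def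
proof (elim exE)
  fix xs ys assume f: "\<forall>\<omega>. f \<omega> = (\<Sum>x\<leftarrow>xs. fst x * plin I (snd x) \<omega>)"
    and g: "\<forall>\<omega>. g \<omega> = (\<Sum>x\<leftarrow>ys. fst x * plin I (snd x) \<omega>)"
  define zs where "zs = concat (map (\<lambda>x. map (\<lambda>y. (fst x * fst y, snd x @ snd y)) ys) xs)"
  have "f \<omega> * g \<omega> = (\<Sum>x\<leftarrow>zs. fst x * plin I (snd x) \<omega>)" for \<omega>
    unfolding f[rule_format] g[rule_format] zs_def
  proof (induction xs)
    case Nil then show ?case by simp
  next
    case (Cons x xs)
    have "(\<Sum>y\<leftarrow>ys. fst x * fst y * plin I (snd x @ snd y) \<omega>) =
       fst x * plin I (snd x) \<omega> * (\<Sum>y\<leftarrow>ys. fst y * plin I (snd y) \<omega>)"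
      by (simp add: plin_append sum_list_const_mult[symmetric] algebra_simps)
    then show ?case using Cons by (simp add: algebra_simps o_def)
  qed
  then show "\<exists>zs. \<forall>\<omega>. f \<omega> * g \<omega> = (\<Sum>x\<leftarrow>zs. fst x * plin I (snd x) \<omega>)" by blast
qed

lemma polyf_sum: "finite K \<Longrightarrow> (\<And>k. k \<in> K \<Longrightarrow> polyf I (f k)) \<Longrightarrow> polyf I (\<lambda>\<omega>. \<Sum>k\<in>K. f k \<omega>)"
proof (induction K rule: finite_induct)
  case empty then show ?case using polyf_const[of I 0] by simp
next
  case (insert x F)
  then show ?case using polyf_add[of I "f x" "\<lambda>\<omega>. \<Sum>k\<in>F. f k \<omega>"] by simp
qed

lemma polyf_cmult: "polyf I f \<Longrightarrow> polyf I (\<lambda>\<omega>. a * f \<omega>)"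
  using polyf_mult[OF polyf_const] by blast

lemma plin_int:
  assumes "finite I"
  assumes Tadd: "\<And>a b. T (\<lambda>p. a p + b p) = (\<lambda>p. T a p + T b p)"
  assumes Tnorm: "\<And>a. (\<Sum>p\<in>I. (T a p)\<^sup>2) = (\<Sum>p\<in>I. (a p)\<^sup>2)"
  shows "integrable (PiM I (\<lambda>_. NN)) (plin I cs)"
    "(\<integral>\<omega>. plin I (map T cs) \<omega> \<partial>PiM I (\<lambda>_. NN)) = (\<integral>\<omega>. plin I cs \<omega> \<partial>PiM I (\<lambda>_. NN))"
proof -
  have T0: "T (\<lambda>_. 0) = (\<lambda>_. 0)"
  proof -
    have "T (\<lambda>p. (\<lambda>_. 0) p + (\<lambda>_. 0) p) = (\<lambda>p. T (\<lambda>_. 0) p + T (\<lambda>_. 0) p)" by (rule Tadd)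
    then have "T (\<lambda>_. 0) = (\<lambda>p. T (\<lambda>_. 0) p + T (\<lambda>_. 0) p)" by simp
    then show ?thesis by (metis add_cancel_left_right)
  qed
  show "integrable (PiM I (\<lambda>_. NN)) (plin I cs)"
    unfolding plin_pol by (intro integrable_divide pol_integrable assms)
  show "(\<integral>\<omega>. plin I (map T cs) \<omega> \<partial>PiM I (\<lambda>_. NN)) = (\<integral>\<omega>. plin I cs \<omega> \<partial>PiM I (\<lambda>_. NN))"
    unfolding plin_pol using pol_int[OF assms, of cs "\<lambda>_. 0" "length cs"] by (simp add: T0)
qed

lemma polyf_inv:
  assumes "finite I" "polyf I f"
  assumes Tadd: "\<And>a b. T (\<lambda>p. a p + b p) = (\<lambda>p. T a p + T b p)"
  assumes Tnorm: "\<And>a. (\<Sum>p\<in>I. (T a p)\<^sup>2) = (\<Sum>p\<in>I. (a p)\<^sup>2)"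
  assumes rot: "\<And>c \<omega>. lin I c (R \<omega>) = lin I (T c) \<omega>"
  shows "integrable (PiM I (\<lambda>_. NN)) f \<and>
    (\<integral>\<omega>. f (R \<omega>) \<partial>PiM I (\<lambda>_. NN)) = (\<integral>\<omega>. f \<omega> \<partial>PiM I (\<lambda>_. NN))"
proof -
  obtain xs where f: "\<And>\<omega>. f \<omega> = (\<Sum>x\<leftarrow>xs. fst x * plin I (snd x) \<omega>)"
    using assms(2) unfolding polyf_def by blast
  have fs: "f \<omega> = (\<Sum>k<length xs. fst (xs!k) * plin I (snd (xs!k)) \<omega>)" for \<omega>
    by (simp add: f sum_list_sum_nth atLeast0LessThan)
  have pR: "plin I cs (R \<omega>) = plin I (map T cs) \<omega>" for cs \<omega>
    by (simp add: plin_def rot o_def)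
  have fR: "f (R \<omega>) = (\<Sum>k<length xs. fst (xs!k) * plin I (map T (snd (xs!k))) \<omega>)" for \<omega>
    by (simp add: fs pR)
  note pi = plin_int[OF assms(1) Tadd Tnorm]
  have "(\<integral>\<omega>. f (R \<omega>) \<partial>PiM I (\<lambda>_. NN)) = (\<integral>\<omega>. (\<Sum>k<length xs. fst (xs!k) * plin I (map T (snd (xs!k))) \<omega>) \<partial>PiM I (\<lambda>_. NN))"
    by (simp only: fR)
  also have "\<dots> = (\<integral>\<omega>. (\<Sum>k<length xs. fst (xs!k) * plin I (snd (xs!k)) \<omega>) \<partial>PiM I (\<lambda>_. NN))"
    by (simp add: pi integral_sum integral_mult_right_zero)
  also have "\<dots> = (\<integral>\<omega>. f \<omega> \<partial>PiM I (\<lambda>_. NN))" by (simp only: fs)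
  finally show ?thesis
    unfolding fs by (simp add: pi)
qed



definition mpoly :: "nat \<Rightarrow> (((nat \<times> 'd::finite) \<Rightarrow> real) \<Rightarrow> real^'d^'d) \<Rightarrow> bool" where
  "mpoly n A \<longleftrightarrow> (\<forall>a b. polyf ({..<n} \<times> UNIV) (\<lambda>\<omega>. A \<omega> $ a $ b))"

lemma finite_Ix: "finite ({..<(n::nat)} \<times> (UNIV :: 'd::finite set))" by simp

lemma sum_prod: "(\<Sum>p\<in>A \<times> B. f p) = (\<Sum>i\<in>A. \<Sum>j\<in>B. f (i, j))"
  by (simp add: sum.cartesian_product)

lemma mpoly_const: "mpoly n (\<lambda>\<omega>. C)"
  by (simp add: mpoly_def polyf_const)

lemma mpoly_mult: "mpoly n A \<Longrightarrow> mpoly n B \<Longrightarrow> mpoly n (\<lambda>\<omega>. A \<omega> ** B \<omega>)"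
  unfolding mpoly_def matrix_matrix_mult_def
  by (auto intro!: polyf_sum polyf_mult)

lemma mpoly_pow: "mpoly n A \<Longrightarrow> mpoly n (\<lambda>\<omega>. mat_pow (A \<omega>) k)"
  by (induction k) (auto intro: mpoly_mult mpoly_const)

lemma cov_entry: "sample_cov n \<omega> $ a $ b = (1 / real n) * (\<Sum>i<n. \<omega> (i, a) * \<omega> (i, b))"
  by (simp add: sample_cov_def outer_def sample_vec_def)

lemma mpoly_cov: "mpoly n (sample_cov n)"
  unfolding mpoly_def cov_entry
  by (intro allI polyf_cmult polyf_sum polyf_mult polyf_coord finite_Ix) auto

lemma mat_expand: "(F :: real^'d^'d) = (\<Sum>a\<in>UNIV. \<Sum>b\<in>UNIV. F $ a $ b *\<^sub>R (\<chi> i j. if i = a \<and> j = b then 1 else 0))"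
proof -
  have "(\<Sum>a\<in>UNIV. \<Sum>b\<in>UNIV. F $ a $ b * (if i = a \<and> j = b then 1 else 0)) = F $ i $ j" for i j
  proof -
    have eq: "F $ a $ b * (if i = a \<and> j = b then 1 else 0) = (if a = i then (if b = j then F $ a $ b else 0) else 0)" for a b
      by auto
    have "(\<Sum>a\<in>UNIV. \<Sum>b\<in>UNIV. F $ a $ b * (if i = a \<and> j = b then 1 else 0))
        = (\<Sum>a\<in>UNIV. \<Sum>b\<in>UNIV. if a = i then (if b = j then F $ a $ b else 0) else 0)"
      by (simp only: eq)
    also have "\<dots> = (\<Sum>a\<in>UNIV. if a = i then (\<Sum>b\<in>UNIV. if b = j then F $ a $ b else 0) else 0)"
      by (intro sum.cong refl) auto
    also have "\<dots> = F $ i $ j" by (simp add: sum.delta)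
    finally show ?thesis .
  qed
  then show ?thesis by (simp add: vec_eq_iff)
qed

lemma mat_integrable:
  assumes "\<And>a b. integrable M (\<lambda>\<omega>. F \<omega> $ a $ b)"
  shows "integrable M (F :: _ \<Rightarrow> real^'d^'d)"
proof -
  have "integrable M (\<lambda>\<omega>. \<Sum>a\<in>UNIV. \<Sum>b\<in>UNIV. F \<omega> $ a $ b *\<^sub>R (\<chi> i j. if i = a \<and> j = b then 1 else (0::real)) :: real^'d^'d)"
    apply (rule Bochner_Integration.integrable_sum)
    apply (rule Bochner_Integration.integrable_sum)
    apply (rule integrable_scaleR_left)
    apply (rule assms)
    done
  then show ?thesis by (subst (asm) mat_expand[symmetric])
qed

lemma mat_integral_nth:
  assumes "integrable M (F :: _ \<Rightarrow> real^'d^'d)"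
  shows "(\<integral>\<omega>. F \<omega> \<partial>M) $ a $ b = (\<integral>\<omega>. F \<omega> $ a $ b \<partial>M)"
proof -
  have bl: "bounded_linear (\<lambda>x::real^'d^'d. x $ a $ b)"
    by (rule bounded_linear_compose[OF bounded_linear_vec_nth bounded_linear_vec_nth])
  show ?thesis using integral_bounded_linear[OF bl assms] by simp
qed

definition rotO :: "real^'d^'d \<Rightarrow> ((nat \<times> 'd::finite) \<Rightarrow> real) \<Rightarrow> ((nat \<times> 'd) \<Rightarrow> real)" where
  "rotO Q \<omega> = (\<lambda>(i, j). \<Sum>l\<in>UNIV. Q $ j $ l * \<omega> (i, l))"

definition TO :: "real^'d^'d \<Rightarrow> ((nat \<times> 'd::finite) \<Rightarrow> real) \<Rightarrow> ((nat \<times> 'd) \<Rightarrow> real)" where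
  "TO Q c = (\<lambda>(i, l). \<Sum>j\<in>UNIV. c (i, j) * Q $ j $ l)"

lemma TO_add: "TO Q (\<lambda>p. a p + b p) = (\<lambda>p. TO Q a p + TO Q b p)"
  by (auto simp: TO_def fun_eq_iff sum.distrib algebra_simps)

lemma sum_swap3: "(\<Sum>l\<in>C. \<Sum>j\<in>A. \<Sum>j'\<in>B. f j j' l) = (\<Sum>j\<in>A. \<Sum>j'\<in>B. \<Sum>l\<in>C. f j j' l)"
proof -
  have "(\<Sum>l\<in>C. \<Sum>j\<in>A. \<Sum>j'\<in>B. f j j' l) = (\<Sum>j\<in>A. \<Sum>l\<in>C. \<Sum>j'\<in>B. f j j' l)" by (rule sum.swap)
  also have "\<dots> = (\<Sum>j\<in>A. \<Sum>j'\<in>B. \<Sum>l\<in>C. f j j' l)" by (rule sum.cong[OF refl], rule sum.swap)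
  finally show ?thesis .
qed

lemma orth_sumsq:
  assumes "orthogonal_matrix (Q :: real^'d::finite^'d)"
  shows "(\<Sum>l\<in>UNIV. (\<Sum>j\<in>UNIV. c j * Q$j$l)\<^sup>2) = (\<Sum>j\<in>UNIV. (c j)\<^sup>2)"
proof -
  have OO: "(\<Sum>l\<in>UNIV. Q$j$l * Q$j'$l) = (if j = j' then 1 else 0)" for j j'
  proof -
    have "Q ** transpose Q = mat 1" using assms by (simp add: orthogonal_matrix_def)
    then have "(Q ** transpose Q) $ j $ j' = mat 1 $ j $ j'" by simp
    then show ?thesis by (simp add: matrix_matrix_mult_def transpose_def mat_def)
  qed
  have "(\<Sum>l\<in>UNIV. (\<Sum>j\<in>UNIV. c j * Q$j$l)\<^sup>2) = (\<Sum>l\<in>UNIV. \<Sum>j\<in>UNIV. \<Sum>j'\<in>UNIV. c j * c j' * (Q$j$l * Q$j'$l))"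
    unfolding power2_eq_square sum_product by (intro sum.cong refl) (simp add: mult_ac)
  also have "\<dots> = (\<Sum>j\<in>UNIV. \<Sum>j'\<in>UNIV. \<Sum>l\<in>UNIV. c j * c j' * (Q$j$l * Q$j'$l))"
    by (rule sum_swap3)
  also have "\<dots> = (\<Sum>j\<in>UNIV. \<Sum>j'\<in>UNIV. c j * c j' * (if j = j' then 1 else 0))"
    by (simp only: sum_distrib_left[symmetric] OO)
  also have "\<dots> = (\<Sum>j\<in>UNIV. \<Sum>j'\<in>UNIV. if j = j' then c j * c j' else 0)"
    by (intro sum.cong refl) auto
  also have "\<dots> = (\<Sum>j\<in>UNIV. (c j)\<^sup>2)"
    by (simp add: power2_eq_square sum.delta)
  finally show ?thesis .
qed

lemma TO_norm:
  assumes "orthogonal_matrix Q"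
  shows "(\<Sum>p\<in>{..<n} \<times> UNIV. (TO Q c p)\<^sup>2) = (\<Sum>p\<in>{..<n} \<times> (UNIV::'d::finite set). (c p)\<^sup>2)"
  by (simp add: sum_prod TO_def orth_sumsq[OF assms])

lemma lin_rotO: "lin ({..<n} \<times> (UNIV::'d::finite set)) c (rotO Q \<omega>) = lin ({..<n} \<times> UNIV) (TO Q c) \<omega>"
proof -
  have "lin ({..<n} \<times> (UNIV::'d set)) c (rotO Q \<omega>) = (\<Sum>i<n. \<Sum>j\<in>UNIV. \<Sum>l\<in>UNIV. c (i, j) * Q $ j $ l * \<omega> (i, l))"
    by (simp add: lin_def rotO_def sum_prod sum_distrib_left mult.assoc)
  also have "\<dots> = (\<Sum>i<n. \<Sum>l\<in>UNIV. \<Sum>j\<in>UNIV. c (i, j) * Q $ j $ l * \<omega> (i, l))"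
    by (rule sum.cong[OF refl], rule sum.swap)
  also have "\<dots> = lin ({..<n} \<times> UNIV) (TO Q c) \<omega>"
    by (simp add: lin_def TO_def sum_prod sum_distrib_right)
  finally show ?thesis .
qed

lemma mpoly_inv:
  assumes "mpoly n F" "orthogonal_matrix Q"
  shows "integrable (gauss_sample n) F"
    "(\<integral>\<omega>. F (rotO Q \<omega>) $ a $ b \<partial>gauss_sample n) = (\<integral>\<omega>. F \<omega> $ a $ b \<partial>gauss_sample n)"
proof -
  have *: "integrable (gauss_sample n) (\<lambda>\<omega>. F \<omega> $ a $ b) \<and>
     (\<integral>\<omega>. F (rotO Q \<omega>) $ a $ b \<partial>gauss_sample n) = (\<integral>\<omega>. F \<omega> $ a $ b \<partial>gauss_sample n)" for a b
    unfolding gauss_sample_def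
    using polyf_inv[OF finite_Ix, of n "\<lambda>\<omega>. F \<omega> $ a $ b" "TO Q" "rotO Q"] assms
    by (simp add: mpoly_def TO_add TO_norm lin_rotO)
  then show "integrable (gauss_sample n) F" by (intro mat_integrable) blast
  show "(\<integral>\<omega>. F (rotO Q \<omega>) $ a $ b \<partial>gauss_sample n) = (\<integral>\<omega>. F \<omega> $ a $ b \<partial>gauss_sample n)"
    using * by blast
qed



definition Fm :: "nat \<Rightarrow> nat \<Rightarrow> nat \<Rightarrow> real^'d^'d \<Rightarrow> real^'d^'d \<Rightarrow> ((nat \<times> 'd::finite) \<Rightarrow> real) \<Rightarrow> real^'d^'d" where
  "Fm n k k' A B \<omega> = sample_cov n \<omega> ** A ** mat_pow (sample_cov n \<omega>) k ** B ** mat_pow (sample_cov n \<omega>) k'"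

definition EE :: "nat \<Rightarrow> nat \<Rightarrow> nat \<Rightarrow> real^'d^'d \<Rightarrow> real^'d^'d \<Rightarrow> real^'d::finite^'d" where
  "EE n k k' A B = (\<integral>\<omega>. Fm n k k' A B \<omega> \<partial>gauss_sample n)"

lemma mpoly_Fm: "mpoly n (Fm n k k' A B)"
  unfolding Fm_def
  by (intro mpoly_mult mpoly_pow mpoly_cov mpoly_const)

lemma integrable_Fm: "integrable (gauss_sample n) (Fm n k k' A B)"
  using mpoly_inv(1)[OF mpoly_Fm orthogonal_matrix_id] .

lemma outer_rot: "outer (Q *v x) = Q ** outer x ** transpose Q"
proof -
  have "(\<Sum>l\<in>UNIV. Q$a$l * x$l) * (\<Sum>l\<in>UNIV. Q$b$l * x$l) =
      (\<Sum>e\<in>UNIV. (\<Sum>c\<in>UNIV. Q$a$c * (x$c * x$e)) * Q$b$e)" for a b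
  proof -
    have "(\<Sum>l\<in>UNIV. Q$a$l * x$l) * (\<Sum>l\<in>UNIV. Q$b$l * x$l) = (\<Sum>c\<in>UNIV. \<Sum>e\<in>UNIV. Q$a$c * x$c * (Q$b$e * x$e))"
      by (rule sum_product)
    also have "\<dots> = (\<Sum>e\<in>UNIV. \<Sum>c\<in>UNIV. Q$a$c * x$c * (Q$b$e * x$e))" by (rule sum.swap)
    also have "\<dots> = (\<Sum>e\<in>UNIV. (\<Sum>c\<in>UNIV. Q$a$c * (x$c * x$e)) * Q$b$e)"
      by (simp add: sum_distrib_right sum_distrib_left mult_ac)
    finally show ?thesis .
  qed
  then show ?thesis
    by (simp add: vec_eq_iff outer_def matrix_matrix_mult_def matrix_vector_mult_def transpose_def)
qed

lemma mat_sum_ldistrib: "(A :: real^'n^'m) ** (\<Sum>i\<in>I. B i) = (\<Sum>i\<in>I. A ** B i)"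
  by (induction I rule: infinite_finite_induct) (auto simp: matrix_add_ldistrib)

lemma matrix_add_rdistrib': "((B + C) ** (A :: real^'n^'m)) = (B ** A) + (C ** A)"
  by (simp add: vec_eq_iff matrix_matrix_mult_def sum.distrib[symmetric] algebra_simps)

lemma mat_sum_rdistrib: "(\<Sum>i\<in>I. B i) ** (A :: real^'n^'m) = (\<Sum>i\<in>I. B i ** A)"
  by (induction I rule: infinite_finite_induct) (auto simp: matrix_add_rdistrib')

lemma rot_vec: "sample_vec (rotO Q \<omega>) i = Q *v sample_vec \<omega> i"
  by (simp add: vec_eq_iff sample_vec_def rotO_def matrix_vector_mult_def)

lemma rot_cov: "sample_cov n (rotO Q \<omega>) = Q ** sample_cov n \<omega> ** transpose Q"
  by (simp add: sample_cov_def rot_vec outer_rot mat_sum_ldistrib mat_sum_rdistrib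
      scalar_matrix_assoc matrix_scalar_ac matrix_mul_assoc scaleR_sum_right)

lemma QtQ:
  assumes "orthogonal_matrix Q"
  shows "(X :: real^'d::finite^'d) ** transpose Q ** Q = X"
proof -
  have "transpose Q ** Q = mat 1" using assms by (simp add: orthogonal_matrix_def)
  then show ?thesis by (simp add: matrix_mul_assoc[symmetric])
qed

lemma rot_pow:
  assumes "orthogonal_matrix Q"
  shows "mat_pow (Q ** S ** transpose Q) k = Q ** mat_pow (S :: real^'d::finite^'d) k ** transpose Q"
proof (induction k)
  case 0
  show ?case using assms by (simp add: orthogonal_matrix_def)
next
  case (Suc k)
  show ?case by (simp add: Suc matrix_mul_assoc QtQ[OF assms])
qed

lemma rot_Fm:
  assumes "orthogonal_matrix Q"
  shows "Fm n k k' (Q ** A ** transpose Q) (Q ** B ** transpose Q) (rotO Q \<omega>) = Q ** Fm n k k' A B \<omega> ** transpose Q"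
  by (simp add: Fm_def rot_cov rot_pow[OF assms] matrix_mul_assoc QtQ[OF assms])

lemma bl_conj: "bounded_linear (\<lambda>X :: real^'d::finite^'d. Q ** X ** P)"
proof -
  have "linear (\<lambda>X :: real^'d^'d. Q ** X ** P)"
    by (rule linearI) (simp_all add: matrix_add_ldistrib matrix_add_rdistrib' matrix_scalar_ac scalar_matrix_assoc)
  then show ?thesis by (simp add: linear_conv_bounded_linear)
qed

lemma EE_rot:
  assumes "orthogonal_matrix Q"
  shows "EE n k k' (Q ** A ** transpose Q) (Q ** B ** transpose Q) = Q ** EE n k k' A B ** transpose Q"
proof -
  have "EE n k k' (Q ** A ** transpose Q) (Q ** B ** transpose Q) $ a $ b = (Q ** EE n k k' A B ** transpose Q) $ a $ b" for a b
  proof -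
    have "EE n k k' (Q ** A ** transpose Q) (Q ** B ** transpose Q) $ a $ b
       = (\<integral>\<omega>. Fm n k k' (Q ** A ** transpose Q) (Q ** B ** transpose Q) \<omega> $ a $ b \<partial>gauss_sample n)"
      unfolding EE_def by (rule mat_integral_nth[OF integrable_Fm])
    also have "\<dots> = (\<integral>\<omega>. Fm n k k' (Q ** A ** transpose Q) (Q ** B ** transpose Q) (rotO Q \<omega>) $ a $ b \<partial>gauss_sample n)"
      by (rule mpoly_inv(2)[OF mpoly_Fm assms, symmetric])
    also have "\<dots> = (\<integral>\<omega>. (Q ** Fm n k k' A B \<omega> ** transpose Q) $ a $ b \<partial>gauss_sample n)"
      by (simp add: rot_Fm[OF assms])
    also have "\<dots> = (\<integral>\<omega>. Q ** Fm n k k' A B \<omega> ** transpose Q \<partial>gauss_sample n) $ a $ b"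
      by (rule mat_integral_nth[symmetric]) (rule integrable_bounded_linear[OF bl_conj integrable_Fm])
    also have "\<dots> = (Q ** EE n k k' A B ** transpose Q) $ a $ b"
      unfolding EE_def using integral_bounded_linear[OF bl_conj[of Q "transpose Q"] integrable_Fm] by simp
    finally show ?thesis .
  qed
  then show ?thesis by (simp add: vec_eq_iff)
qed



definition mono_mat :: "('d \<Rightarrow> 'd) \<Rightarrow> ('d \<Rightarrow> real) \<Rightarrow> real^'d^'d::finite" where
  "mono_mat \<pi> s = (\<chi> a c. if a = \<pi> c then s c else 0)"

definition Ej :: "'d \<Rightarrow> real^'d^'d::finite" where
  "Ej j = (\<chi> a b. if a = j \<and> b = j then 1 else 0)"

lemma mono_orth:
  assumes "bij \<pi>" "\<And>c. (s c)\<^sup>2 = 1"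
  shows "orthogonal_matrix (mono_mat \<pi> s :: real^'d::finite^'d)"
proof -
  have inj: "\<pi> x = \<pi> y \<longleftrightarrow> x = y" for x y using assms(1) by (meson bij_is_inj inj_eq)
  have "(transpose (mono_mat \<pi> s) ** mono_mat \<pi> s) $ i $ j = mat 1 $ i $ j" for i j :: 'd
  proof -
    have "(transpose (mono_mat \<pi> s) ** mono_mat \<pi> s) $ i $ j
        = (\<Sum>a\<in>UNIV. (if a = \<pi> i then s i else 0) * (if a = \<pi> j then s j else 0))"
      by (simp add: matrix_matrix_mult_def transpose_def mono_mat_def)
    also have "\<dots> = (\<Sum>a\<in>UNIV. if a = \<pi> i then (if i = j then s i * s j else 0) else 0)"
      by (rule sum.cong) (auto simp: inj)
    also have "\<dots> = mat 1 $ i $ j" using assms(2)[of i] by (auto simp: mat_def power2_eq_square)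
    finally show ?thesis .
  qed
  then show ?thesis by (simp add: orthogonal_matrix vec_eq_iff)
qed

lemma mono_conj:
  assumes "bij \<pi>"
  shows "(mono_mat \<pi> s ** X ** transpose (mono_mat \<pi> s)) $ (\<pi> a) $ (\<pi> b) = s a * s b * (X :: real^'d::finite^'d) $ a $ b"
proof -
  have inj: "\<pi> x = \<pi> y \<longleftrightarrow> x = y" for x y using assms(1) by (meson bij_is_inj inj_eq)
  have "(mono_mat \<pi> s ** X ** transpose (mono_mat \<pi> s)) $ (\<pi> a) $ (\<pi> b)
      = (\<Sum>e\<in>UNIV. (\<Sum>c\<in>UNIV. (if c = a then s a else 0) * X $ c $ e) * (if e = b then s b else 0))"
    by (auto simp: matrix_matrix_mult_def transpose_def mono_mat_def inj intro!: sum.cong)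
  also have "\<dots> = (\<Sum>e\<in>UNIV. if e = b then s a * X $ a $ e * s b else 0)"
    by (intro sum.cong refl) (simp add: if_distrib if_distribR sum.delta cong: if_cong)
  also have "\<dots> = s a * s b * X $ a $ b" by (simp add: sum.delta)
  finally show ?thesis .
qed

lemma mono_Ej:
  assumes "bij \<pi>" "\<And>c. (s c)\<^sup>2 = 1"
  shows "mono_mat \<pi> s ** Ej j ** transpose (mono_mat \<pi> s) = (Ej (\<pi> j) :: real^'d::finite^'d)"
proof -
  have inj: "\<pi> x = \<pi> y \<longleftrightarrow> x = y" for x y using assms(1) by (meson bij_is_inj inj_eq)
  have "(mono_mat \<pi> s ** Ej j ** transpose (mono_mat \<pi> s)) $ (\<pi> a) $ (\<pi> b) = Ej (\<pi> j) $ (\<pi> a) $ (\<pi> b)" for a b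
    using assms(2)[of j] by (auto simp: mono_conj[OF assms(1)] Ej_def inj power2_eq_square)
  moreover have "surj \<pi>" using assms(1) by (simp add: bij_is_surj)
  ultimately have "(mono_mat \<pi> s ** Ej j ** transpose (mono_mat \<pi> s)) $ a $ b = Ej (\<pi> j) $ a $ b" for a b
    by (metis surj_f_inv_f)
  then show ?thesis by (simp add: vec_eq_iff)
qed

lemma EE_mono:
  fixes \<pi> :: "'d::finite \<Rightarrow> 'd"
  assumes "bij \<pi>" "\<And>c. (s c)\<^sup>2 = 1"
  shows "EE n k k' (Ej (\<pi> j)) (Ej (\<pi> l)) $ (\<pi> a) $ (\<pi> b) = s a * s b * (EE n k k' (Ej j) (Ej l) :: real^'d::finite^'d) $ a $ b"
  using EE_rot[OF mono_orth[where \<pi>=\<pi> and s=s, OF assms], of n k k' "Ej j" "Ej l"] mono_conj[OF assms(1)]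
  by (simp add: mono_Ej[where \<pi>=\<pi> and s=s, OF assms])

lemma EE_offdiag:
  assumes "a \<noteq> b"
  shows "(EE n k k' (Ej j) (Ej l) :: real^'d::finite^'d) $ a $ b = 0"
proof -
  define s where "s = (\<lambda>c::'d. if c = a then -1 else (1::real))"
  have "EE n k k' (Ej (id j)) (Ej (id l)) $ (id a) $ (id b) = s a * s b * (EE n k k' (Ej j) (Ej l) :: real^'d::finite^'d) $ a $ b"
    by (rule EE_mono[OF bij_id]) (auto simp: s_def)
  then show ?thesis using assms by (simp add: s_def)
qed

definition tt :: "nat \<Rightarrow> nat \<Rightarrow> nat \<Rightarrow> 'd::finite \<Rightarrow> 'd \<Rightarrow> 'd \<Rightarrow> real" where
  "tt n k k' j l a = (EE n k k' (Ej j) (Ej l) :: real^'d^'d) $ a $ a"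

lemma tt_perm:
  fixes \<pi> :: "'d::finite \<Rightarrow> 'd"
  assumes "bij \<pi>"
  shows "tt n k k' (\<pi> j) (\<pi> l) (\<pi> a) = tt n k k' j l a"
  unfolding tt_def using EE_mono[OF assms, of "\<lambda>_. 1"] by simp

definition sw :: "'a \<Rightarrow> 'a \<Rightarrow> 'a \<Rightarrow> 'a" where
  "sw x y = (\<lambda>z. if z = x then y else if z = y then x else z)"

lemma bij_sw: "bij (sw x y)"
proof -
  have "sw x y (sw x y z) = z" for z by (auto simp: sw_def)
  then show ?thesis by (metis bijI' )
qed

lemma perm_exists:
  "distinct (xs::'a list) \<Longrightarrow> distinct (ys::'a list) \<Longrightarrow> length xs = length ys \<Longrightarrow> \<exists>\<pi>. bij \<pi> \<and> map \<pi> xs = ys"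
proof (induction xs arbitrary: ys)
  case Nil then show ?case by (intro exI[of _ "\<lambda>x. x"]) (auto simp: bij_def)
next
  case (Cons x xs)
  then obtain y ys' where ys: "ys = y # ys'" by (cases ys) auto
  with Cons obtain \<sigma> where \<sigma>: "bij \<sigma>" "map \<sigma> xs = ys'" by auto
  have inj: "\<sigma> u = \<sigma> v \<longleftrightarrow> u = v" for u v using \<sigma>(1) by (meson bij_is_inj inj_eq)
  have notin: "\<sigma> x \<notin> set ys'" using Cons.prems \<sigma>(2) by (auto simp: inj)
  have yn: "y \<notin> set ys'" using Cons.prems ys by auto
  have m1: "map (sw (\<sigma> x) y \<circ> \<sigma>) xs = ys'"
  proof -
    have "sw (\<sigma> x) y z = z" if "z \<in> set ys'" for z using that notin yn by (auto simp: sw_def)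
    then have "map (sw (\<sigma> x) y) ys' = ys'" by (rule map_idI)
    moreover have "map (sw (\<sigma> x) y \<circ> \<sigma>) xs = map (sw (\<sigma> x) y) (map \<sigma> xs)" by simp
    ultimately show ?thesis using \<sigma>(2) by simp
  qed
  have m2: "(sw (\<sigma> x) y \<circ> \<sigma>) x = y" by (simp add: sw_def)
  have b: "bij (sw (\<sigma> x) y \<circ> \<sigma>)" using bij_comp[OF \<sigma>(1) bij_sw] .
  have "map (sw (\<sigma> x) y \<circ> \<sigma>) (x # xs) = ys" using m1 m2 ys by (simp only: list.map)
  then show ?case using b by blast
qed



lemma conj_sum: "(Q :: real^'d::finite^'d) ** (\<Sum>j\<in>J. c j *\<^sub>R X j) ** P = (\<Sum>j\<in>J. c j *\<^sub>R (Q ** X j ** P))"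
  by (simp add: mat_sum_ldistrib mat_sum_rdistrib matrix_scalar_ac scalar_matrix_assoc)

lemma Fm_suml: "Fm n k k' (\<Sum>j\<in>J. c j *\<^sub>R A j) B \<omega> = (\<Sum>j\<in>J. c j *\<^sub>R Fm n k k' (A j) B \<omega>)"
  unfolding Fm_def
  by (simp add: mat_sum_ldistrib mat_sum_rdistrib matrix_scalar_ac scalar_matrix_assoc matrix_mul_assoc)

lemma Fm_sumr: "Fm n k k' A (\<Sum>j\<in>J. c j *\<^sub>R B j) \<omega> = (\<Sum>j\<in>J. c j *\<^sub>R Fm n k k' A (B j) \<omega>)"
  unfolding Fm_def
  by (simp add: mat_sum_ldistrib mat_sum_rdistrib matrix_scalar_ac scalar_matrix_assoc matrix_mul_assoc)

lemma EE_suml: "EE n k k' (\<Sum>j\<in>J. c j *\<^sub>R A j) B = (\<Sum>j\<in>J. c j *\<^sub>R EE n k k' (A j) B)"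
  unfolding EE_def Fm_suml
  by (simp add: integral_sum integrable_Fm)

lemma EE_sumr: "EE n k k' A (\<Sum>j\<in>J. c j *\<^sub>R B j) = (\<Sum>j\<in>J. c j *\<^sub>R EE n k k' A (B j))"
  unfolding EE_def Fm_sumr
  by (simp add: integral_sum integrable_Fm)

definition dg :: "('d \<Rightarrow> real) \<Rightarrow> real^'d^'d::finite" where
  "dg v = (\<chi> a b. if a = b then v a else 0)"

lemma dg_sum:
  fixes v :: "'d::finite \<Rightarrow> real"
  shows "dg v = (\<Sum>j\<in>UNIV. v j *\<^sub>R Ej j)"
proof -
  have "(\<Sum>j\<in>UNIV. v j * (if a = j \<and> b = j then 1 else 0)) = (if a = b then v a else 0)" for a b :: 'd
  proof -
    have "(\<Sum>j\<in>UNIV. v j * (if a = j \<and> b = j then 1 else 0)) = (\<Sum>j\<in>UNIV. if j = a then (if a = b then v a else 0) else 0)"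
      by (rule sum.cong) auto
    then show ?thesis by simp
  qed
  then show ?thesis by (simp add: vec_eq_iff dg_def Ej_def)
qed

lemma EE_dg_entry:
  "EE n k k' (dg v) (dg w) $ a $ b = (\<Sum>j\<in>UNIV. \<Sum>l\<in>UNIV. v j * w l * (EE n k k' (Ej j) (Ej l) :: real^'d::finite^'d) $ a $ b)"
  apply (simp add: dg_sum EE_suml EE_sumr sum_distrib_left mult.assoc)
  apply (subst sum.swap)
  apply (simp add: mult_ac)
  done

lemma tt_transfer:
  fixes xs ys :: "'d::finite list"
  assumes "distinct xs" "distinct ys" "length xs = length ys"
    and "j = xs ! p" "l = xs ! q" "a = xs ! r" "j' = ys ! p" "l' = ys ! q" "a' = ys ! r"
    and "p < length xs" "q < length xs" "r < length xs"
  shows "tt n k k' j l a = tt n k k' j' l' a'"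
proof -
  obtain \<pi> where \<pi>: "bij \<pi>" "map \<pi> xs = ys" using perm_exists[OF assms(1-3)] by blast
  have "\<pi> (xs ! i) = ys ! i" if "i < length xs" for i using \<pi>(2) that by (metis nth_map)
  then show ?thesis using assms tt_perm[OF \<pi>(1), of n k k' j l a] by simp
qed

lemma tt_pattern:
  "\<exists>c1 c2 c3 c4 c5. \<forall>j l a :: 'd::finite. tt n k k' j l a =
     (if j = l \<and> l = a then c1 else if j = l then c2 else if j = a then c3 else if l = a then c4 else c5)"
proof -
  define c1 where "c1 = (SOME v. \<exists>j::'d. v = tt n k k' j j j)"
  define c2 where "c2 = (SOME v. \<exists>j a::'d. j \<noteq> a \<and> v = tt n k k' j j a)"
  define c3 where "c3 = (SOME v. \<exists>j l::'d. j \<noteq> l \<and> v = tt n k k' j l j)"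
  define c4 where "c4 = (SOME v. \<exists>j l::'d. j \<noteq> l \<and> v = tt n k k' j l l)"
  define c5 where "c5 = (SOME v. \<exists>j l a::'d. distinct [j, l, a] \<and> v = tt n k k' j l a)"
  have "tt n k k' j l a =
     (if j = l \<and> l = a then c1 else if j = l then c2 else if j = a then c3 else if l = a then c4 else c5)" for j l a :: 'd
  proof -
    consider "j = l \<and> l = a" | "j = l \<and> l \<noteq> a" | "j \<noteq> l \<and> j = a" | "j \<noteq> l \<and> l = a" | "distinct [j, l, a]"
      by auto
    then show ?thesis
    proof cases
      case 1
      have "\<exists>v. \<exists>j'::'d. v = tt n k k' j' j' j'" by blast
      then have "\<exists>j'::'d. c1 = tt n k k' j' j' j'" unfolding c1_def by (rule someI_ex)
      then obtain j' :: 'd where w: "c1 = tt n k k' j' j' j'" by blast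
      have "tt n k k' j j j = tt n k k' j' j' j'"
        using tt_perm[OF bij_sw[of j j'], of n k k' j j j] by (simp add: sw_def)
      then show ?thesis using 1 w by auto
    next
      case 2
      have "\<exists>v. \<exists>j a::'d. j \<noteq> a \<and> v = tt n k k' j j a" using 2 by blast
      then have "\<exists>j' a'::'d. j' \<noteq> a' \<and> c2 = tt n k k' j' j' a'" unfolding c2_def by (rule someI_ex)
      then obtain j' a' :: 'd where w: "j' \<noteq> a'" "c2 = tt n k k' j' j' a'" by blast
      have "tt n k k' j j a = tt n k k' j' j' a'"
        by (rule tt_transfer[where xs="[j, a]" and ys="[j', a']" and p=0 and q=0 and r=1]) (use 2 w in auto)
      then show ?thesis using 2 w by auto
    next
      case 3
      have "\<exists>v. \<exists>j l::'d. j \<noteq> l \<and> v = tt n k k' j l j" using 3 by blast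
      then have "\<exists>j' l'::'d. j' \<noteq> l' \<and> c3 = tt n k k' j' l' j'" unfolding c3_def by (rule someI_ex)
      then obtain j' l' :: 'd where w: "j' \<noteq> l'" "c3 = tt n k k' j' l' j'" by blast
      have "tt n k k' j l j = tt n k k' j' l' j'"
        by (rule tt_transfer[where xs="[j, l]" and ys="[j', l']" and p=0 and q=1 and r=0]) (use 3 w in auto)
      then show ?thesis using 3 w by auto
    next
      case 4
      have "\<exists>v. \<exists>j l::'d. j \<noteq> l \<and> v = tt n k k' j l l" using 4 by blast
      then have "\<exists>j' l'::'d. j' \<noteq> l' \<and> c4 = tt n k k' j' l' l'" unfolding c4_def by (rule someI_ex)
      then obtain j' l' :: 'd where w: "j' \<noteq> l'" "c4 = tt n k k' j' l' l'" by blast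
      have "tt n k k' j l l = tt n k k' j' l' l'"
        by (rule tt_transfer[where xs="[j, l]" and ys="[j', l']" and p=0 and q=1 and r=1]) (use 4 w in auto)
      then show ?thesis using 4 w by auto
    next
      case 5
      have "\<exists>v. \<exists>j' l' a'::'d. distinct [j', l', a'] \<and> v = tt n k k' j' l' a'" using 5 by blast
      then have "\<exists>j' l' a'::'d. distinct [j', l', a'] \<and> c5 = tt n k k' j' l' a'" unfolding c5_def
        by (rule someI_ex)
      then obtain j' l' a' :: 'd where w: "distinct [j', l', a']" "c5 = tt n k k' j' l' a'" by blast
      have "tt n k k' j l a = tt n k k' j' l' a'"
        by (rule tt_transfer[where xs="[j, l, a]" and ys="[j', l', a']" and p=0 and q=1 and r=2]) (use 5 w in auto)
      then show ?thesis using 5 w by auto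
    qed
  qed
  then show ?thesis by blast
qed



lemma dd_entry: "(dg v ** dg w) $ a $ b = (if a = b then v a * w a else (0::real))"
proof -
  have "(\<Sum>c\<in>UNIV. (if a = c then v a else 0) * (if c = b then w c else 0)) = (\<Sum>c\<in>UNIV. if c = a then (if a = b then v a * w a else 0) else 0)"
    by (rule sum.cong) auto
  then show ?thesis by (simp add: matrix_matrix_mult_def dg_def)
qed

lemma trace_dg: "trace (dg v) = sum v UNIV"
  by (simp add: trace_def dg_def)

lemma trace_dd: "trace (dg v ** dg w) = (\<Sum>j\<in>UNIV. v j * w j)"
  by (simp add: trace_def dd_entry)

lemma dg_entry: "dg v $ a $ b = (if a = b then v a else 0)"
  by (simp add: dg_def)

lemma sums5:
  fixes v w :: "'d::finite \<Rightarrow> real"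
  shows "(\<Sum>j\<in>UNIV. \<Sum>l\<in>UNIV. v j * w l * (if j = l \<and> l = a then 1 else 0)) = v a * w a"
    "(\<Sum>j\<in>UNIV. \<Sum>l\<in>UNIV. v j * w l * (if l = a then 1 else 0)) = sum v UNIV * w a"
    "(\<Sum>j\<in>UNIV. \<Sum>l\<in>UNIV. v j * w l * (if j = a then 1 else 0)) = v a * sum w UNIV"
    "(\<Sum>j\<in>UNIV. \<Sum>l\<in>UNIV. v j * w l) = sum v UNIV * sum w UNIV"
    "(\<Sum>j\<in>UNIV. \<Sum>l\<in>UNIV. v j * w l * (if j = l then 1 else 0)) = (\<Sum>j\<in>UNIV. v j * w j)"
proof -
  have i1: "(\<Sum>l\<in>UNIV. v j * w l * (if j = l \<and> l = a then 1 else 0)) = (if j = a then v a * w a else 0)" for j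
  proof (cases "j = a")
    case True
    have "(\<Sum>l\<in>UNIV. v j * w l * (if j = l \<and> l = a then 1 else 0)) = (\<Sum>l\<in>UNIV. if l = a then v a * w a else 0)"
      using True by (intro sum.cong refl) auto
    then show ?thesis using True by simp
  qed (auto intro!: sum.neutral)
  show "(\<Sum>j\<in>UNIV. \<Sum>l\<in>UNIV. v j * w l * (if j = l \<and> l = a then 1 else 0)) = v a * w a"
    by (simp only: i1) simp
  have i2: "(\<Sum>l\<in>UNIV. v j * w l * (if l = a then 1 else 0)) = v j * w a" for j
  proof -
    have "(\<Sum>l\<in>UNIV. v j * w l * (if l = a then 1 else 0)) = (\<Sum>l\<in>UNIV. if l = a then v j * w a else 0)"
      by (intro sum.cong refl) auto
    then show ?thesis by simp
  qed
  show "(\<Sum>j\<in>UNIV. \<Sum>l\<in>UNIV. v j * w l * (if l = a then 1 else 0)) = sum v UNIV * w a"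
    by (simp only: i2) (simp add: sum_distrib_right)
  have i3: "(\<Sum>l\<in>UNIV. v j * w l * (if j = a then 1 else 0)) = (if j = a then v a * sum w UNIV else 0)" for j
    by (cases "j = a") (simp_all add: sum_distrib_left)
  show "(\<Sum>j\<in>UNIV. \<Sum>l\<in>UNIV. v j * w l * (if j = a then 1 else 0)) = v a * sum w UNIV"
    by (simp only: i3) simp
  show "(\<Sum>j\<in>UNIV. \<Sum>l\<in>UNIV. v j * w l) = sum v UNIV * sum w UNIV"
    by (simp add: sum_product)
  have i5: "(\<Sum>l\<in>UNIV. v j * w l * (if j = l then 1 else 0)) = v j * w j" for j
  proof -
    have "(\<Sum>l\<in>UNIV. v j * w l * (if j = l then 1 else 0)) = (\<Sum>l\<in>UNIV. if l = j then v j * w j else 0)"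
      by (intro sum.cong refl) auto
    then show ?thesis by simp
  qed
  show "(\<Sum>j\<in>UNIV. \<Sum>l\<in>UNIV. v j * w l * (if j = l then 1 else 0)) = (\<Sum>j\<in>UNIV. v j * w j)"
    by (simp only: i5)
qed

lemma diag_formula:
  "\<exists>\<beta>1 \<beta>2 \<beta>3 \<beta>4 \<beta>5 :: real. \<forall>v w :: 'd::finite \<Rightarrow> real.
     EE n k k' (dg v) (dg w) = \<beta>1 *\<^sub>R (dg v ** dg w) + \<beta>2 *\<^sub>R (trace (dg v) *\<^sub>R dg w) + \<beta>3 *\<^sub>R (trace (dg w) *\<^sub>R dg v)
            + \<beta>4 *\<^sub>R ((trace (dg v) * trace (dg w)) *\<^sub>R mat 1) + \<beta>5 *\<^sub>R (trace (dg v ** dg w) *\<^sub>R mat 1)"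
proof -
  obtain c1 c2 c3 c4 c5 where c: "\<And>j l a :: 'd. tt n k k' j l a =
     (if j = l \<and> l = a then c1 else if j = l then c2 else if j = a then c3 else if l = a then c4 else c5)"
    using tt_pattern[of n k k'] by blast
  define \<beta>1 where "\<beta>1 = c1 - c2 - c3 - c4 + 2 * c5"
  define \<beta>2 where "\<beta>2 = c4 - c5"
  define \<beta>3 where "\<beta>3 = c3 - c5"
  define \<beta>4 where "\<beta>4 = c5"
  define \<beta>5 where "\<beta>5 = c2 - c5"
  have tt: "tt n k k' j l a = \<beta>1 * (if j = l \<and> l = a then 1 else 0) + \<beta>2 * (if l = a then 1 else 0)
      + \<beta>3 * (if j = a then 1 else 0) + \<beta>4 + \<beta>5 * (if j = l then 1 else 0)" for j l a :: 'd
    by (simp add: c \<beta>1_def \<beta>2_def \<beta>3_def \<beta>4_def \<beta>5_def)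
  have "EE n k k' (dg v) (dg w) = \<beta>1 *\<^sub>R (dg v ** dg w) + \<beta>2 *\<^sub>R (trace (dg v) *\<^sub>R dg w) + \<beta>3 *\<^sub>R (trace (dg w) *\<^sub>R dg v)
            + \<beta>4 *\<^sub>R ((trace (dg v) * trace (dg w)) *\<^sub>R mat 1) + \<beta>5 *\<^sub>R (trace (dg v ** dg w) *\<^sub>R mat 1)"
    for v w :: "'d \<Rightarrow> real"
  proof -
    have "EE n k k' (dg v) (dg w) $ a $ b = (\<beta>1 *\<^sub>R (dg v ** dg w) + \<beta>2 *\<^sub>R (trace (dg v) *\<^sub>R dg w) + \<beta>3 *\<^sub>R (trace (dg w) *\<^sub>R dg v)
            + \<beta>4 *\<^sub>R ((trace (dg v) * trace (dg w)) *\<^sub>R mat 1) + \<beta>5 *\<^sub>R (trace (dg v ** dg w) *\<^sub>R mat 1)) $ a $ b" for a b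
    proof (cases "a = b")
      case False
      have "EE n k k' (dg v) (dg w) $ a $ b = 0" by (simp only: EE_dg_entry EE_offdiag[OF False]) simp
      moreover have "(\<beta>1 *\<^sub>R (dg v ** dg w) + \<beta>2 *\<^sub>R (trace (dg v) *\<^sub>R dg w) + \<beta>3 *\<^sub>R (trace (dg w) *\<^sub>R dg v)
            + \<beta>4 *\<^sub>R ((trace (dg v) * trace (dg w)) *\<^sub>R mat 1) + \<beta>5 *\<^sub>R (trace (dg v ** dg w) *\<^sub>R mat 1)) $ a $ b = 0"
        using False by (simp add: dd_entry) (simp add: dg_def mat_def)
      ultimately show ?thesis by simp
    next
      case True
      have "EE n k k' (dg v) (dg w) $ a $ a = (\<Sum>j\<in>UNIV. \<Sum>l\<in>UNIV. v j * w l * tt n k k' j l a)"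
        by (simp add: EE_dg_entry tt_def)
      also have "\<dots> = \<beta>1 * (\<Sum>j\<in>UNIV. \<Sum>l\<in>UNIV. v j * w l * (if j = l \<and> l = a then 1 else 0))
          + \<beta>2 * (\<Sum>j\<in>UNIV. \<Sum>l\<in>UNIV. v j * w l * (if l = a then 1 else 0))
          + \<beta>3 * (\<Sum>j\<in>UNIV. \<Sum>l\<in>UNIV. v j * w l * (if j = a then 1 else 0))
          + \<beta>4 * (\<Sum>j\<in>UNIV. \<Sum>l\<in>UNIV. v j * w l)
          + \<beta>5 * (\<Sum>j\<in>UNIV. \<Sum>l\<in>UNIV. v j * w l * (if j = l then 1 else 0))"
        unfolding tt by (simp only: sum_distrib_left sum.distrib[symmetric]) (intro sum.cong refl; simp add: algebra_simps)
      also have "\<dots> = (\<beta>1 *\<^sub>R (dg v ** dg w) + \<beta>2 *\<^sub>R (trace (dg v) *\<^sub>R dg w) + \<beta>3 *\<^sub>R (trace (dg w) *\<^sub>R dg v)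
            + \<beta>4 *\<^sub>R ((trace (dg v) * trace (dg w)) *\<^sub>R mat 1) + \<beta>5 *\<^sub>R (trace (dg v ** dg w) *\<^sub>R mat 1)) $ a $ a"
        unfolding sums5 by (simp add: dd_entry trace_dg trace_dd dg_entry mat_def algebra_simps)
      finally show ?thesis using True by simp
    qed
    then show ?thesis by (simp add: vec_eq_iff)
  qed
  then show ?thesis by blast
qed



lemma orthU:
  assumes "orthonormal_basis u"
  shows "orthogonal_matrix ((\<chi> a j. u j $ a) :: real^'d::finite^'d)"
proof -
  have "(transpose (\<chi> a j. u j $ a) ** (\<chi> a j. u j $ a)) $ i $ j = (mat 1 :: real^'d^'d) $ i $ j" for i j
    using assms by (simp add: orthonormal_basis_def matrix_matrix_mult_def transpose_def mat_def inner_vec_def)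
  then show ?thesis by (simp add: orthogonal_matrix vec_eq_iff)
qed

lemma outer_U: "outer (u j) = (\<chi> a j. u j $ a) ** Ej j ** transpose ((\<chi> a j. u j $ a) :: real^'d::finite^'d)"
proof -
  have "(\<Sum>e\<in>UNIV. (\<Sum>c\<in>UNIV. u c $ a * (if c = j \<and> e = j then 1 else 0)) * u e $ b) = u j $ a * u j $ b" for a b :: 'd
  proof -
    have "(\<Sum>e\<in>UNIV. (\<Sum>c\<in>UNIV. u c $ a * (if c = j \<and> e = j then 1 else 0)) * u e $ b)
        = (\<Sum>e\<in>UNIV. if e = j then u j $ a * u j $ b else 0)"
    proof (intro sum.cong refl)
      fix e
      have "(\<Sum>c\<in>UNIV. u c $ a * (if c = j \<and> e = j then 1 else 0)) = (\<Sum>c\<in>UNIV. if c = j then (if e = j then u j $ a else 0) else 0)"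
        by (intro sum.cong refl) auto
      then show "(\<Sum>c\<in>UNIV. u c $ a * (if c = j \<and> e = j then 1 else 0)) * u e $ b = (if e = j then u j $ a * u j $ b else 0)"
        by simp
    qed
    then show ?thesis by simp
  qed
  then show ?thesis
    by (simp add: vec_eq_iff outer_def matrix_matrix_mult_def transpose_def Ej_def)
qed

lemma cj_add: "Q ** (X + Y) ** P = Q ** X ** P + Q ** Y ** (P :: real^'d::finite^'d)"
  by (simp add: matrix_add_ldistrib matrix_add_rdistrib')

lemma cj_scale: "Q ** (c *\<^sub>R X) ** P = c *\<^sub>R (Q ** X ** (P :: real^'d::finite^'d))"
  by (simp add: matrix_scalar_ac scalar_matrix_assoc)

lemma cj_mult:
  assumes "orthogonal_matrix Q"
  shows "Q ** (X ** Y) ** transpose Q = (Q ** X ** transpose Q) ** (Q ** Y ** transpose (Q :: real^'d::finite^'d))"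
  by (simp add: matrix_mul_assoc QtQ[OF assms])

lemma cj_one:
  assumes "orthogonal_matrix Q"
  shows "Q ** mat 1 ** transpose Q = (mat 1 :: real^'d::finite^'d)"
  using assms by (simp add: orthogonal_matrix_def)

lemma cj_trace:
  assumes "orthogonal_matrix Q"
  shows "trace (Q ** X ** transpose Q) = trace (X :: real^'d::finite^'d)"
proof -
  have "trace (Q ** X ** transpose Q) = trace (transpose Q ** (Q ** X))" by (rule trace_mul_sym)
  also have "\<dots> = trace X" using assms by (simp add: matrix_mul_assoc orthogonal_matrix_def)
  finally show ?thesis .
qed

theorem lemmaD8:
  fixes n k k' :: nat
  assumes "n \<ge> 1"
  shows "\<exists>\<beta>1 \<beta>2 \<beta>3 \<beta>4 \<beta>5 :: real.
    \<forall>(u :: 'd::finite \<Rightarrow> real^'d) (lamL :: 'd \<Rightarrow> real) (lamG :: 'd \<Rightarrow> real).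
      orthonormal_basis u \<longrightarrow>
      (let L = (\<Sum>j\<in>UNIV. lamL j *\<^sub>R outer (u j));
           G = (\<Sum>j\<in>UNIV. lamG j *\<^sub>R outer (u j));
           F = (\<lambda>\<omega>. sample_cov n \<omega> ** L ** mat_pow (sample_cov n \<omega>) k ** G
                     ** mat_pow (sample_cov n \<omega>) k')
       in integrable (gauss_sample n) F \<and>
          (\<integral>\<omega>. F \<omega> \<partial>gauss_sample n) =
            \<beta>1 *\<^sub>R (L ** G) + \<beta>2 *\<^sub>R (trace L *\<^sub>R G) + \<beta>3 *\<^sub>R (trace G *\<^sub>R L)
            + \<beta>4 *\<^sub>R ((trace L * trace G) *\<^sub>R mat 1) + \<beta>5 *\<^sub>R (trace (L ** G) *\<^sub>R mat 1))"
proof -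
  obtain \<beta>1 \<beta>2 \<beta>3 \<beta>4 \<beta>5 :: real where B: "\<And>v w :: 'd \<Rightarrow> real.
     EE n k k' (dg v) (dg w) = \<beta>1 *\<^sub>R (dg v ** dg w) + \<beta>2 *\<^sub>R (trace (dg v) *\<^sub>R dg w) + \<beta>3 *\<^sub>R (trace (dg w) *\<^sub>R dg v)
            + \<beta>4 *\<^sub>R ((trace (dg v) * trace (dg w)) *\<^sub>R mat 1) + \<beta>5 *\<^sub>R (trace (dg v ** dg w) *\<^sub>R mat 1)"
    using diag_formula[of n k k'] by blast
  have main: "integrable (gauss_sample n) (Fm n k k' L G) \<and>
          (\<integral>\<omega>. Fm n k k' L G \<omega> \<partial>gauss_sample n) =
            \<beta>1 *\<^sub>R (L ** G) + \<beta>2 *\<^sub>R (trace L *\<^sub>R G) + \<beta>3 *\<^sub>R (trace G *\<^sub>R L)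
            + \<beta>4 *\<^sub>R ((trace L * trace G) *\<^sub>R mat 1) + \<beta>5 *\<^sub>R (trace (L ** G) *\<^sub>R mat 1)"
    if ob: "orthonormal_basis u" and Ld: "L = (\<Sum>j\<in>UNIV. lamL j *\<^sub>R outer (u j))"
      and Gd: "G = (\<Sum>j\<in>UNIV. lamG j *\<^sub>R outer (u j))"
    for u :: "'d \<Rightarrow> real^'d" and lamL lamG L G
  proof -
    define U where "U = ((\<chi> a j. u j $ a) :: real^'d^'d)"
    have oU: "orthogonal_matrix U" unfolding U_def by (rule orthU[OF ob])
    have LU: "L = U ** dg lamL ** transpose U"
      unfolding Ld dg_sum conj_sum U_def by (simp add: outer_U)
    have GU: "G = U ** dg lamG ** transpose U"
      unfolding Gd dg_sum conj_sum U_def by (simp add: outer_U)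
    have "(\<integral>\<omega>. Fm n k k' L G \<omega> \<partial>gauss_sample n) = EE n k k' L G" by (simp add: EE_def)
    also have "\<dots> = U ** EE n k k' (dg lamL) (dg lamG) ** transpose U"
      unfolding LU GU by (rule EE_rot[OF oU])
    also have "\<dots> = \<beta>1 *\<^sub>R (L ** G) + \<beta>2 *\<^sub>R (trace L *\<^sub>R G) + \<beta>3 *\<^sub>R (trace G *\<^sub>R L)
            + \<beta>4 *\<^sub>R ((trace L * trace G) *\<^sub>R mat 1) + \<beta>5 *\<^sub>R (trace (L ** G) *\<^sub>R mat 1)"
      unfolding B LU GU
      by (simp only: cj_add cj_scale cj_mult[OF oU, symmetric] cj_one[OF oU] cj_trace[OF oU])
    finally show ?thesis using integrable_Fm by blast
  qed
  show ?thesis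
    unfolding Let_def
    by (intro exI[of _ \<beta>1] exI[of _ \<beta>2] exI[of _ \<beta>3] exI[of _ \<beta>4] exI[of _ \<beta>5] allI impI)
       (rule main[unfolded Fm_def[abs_def]], auto)
qed

end
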